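(* For any $n,s\in\mathbb{N}$ and every real number $x$, $$\sum_{k=0}^{n-1}\frac{(-1)^k x^{2k}}{(2k+1)^s}=\sum_{k=1}^n(-1)^{k-1}\binom{n}{k}\,{}_{s+1}F_s\left(\{\tfrac12\}^{s},1-k;\{\tfrac32\}^{s};-x^2\right).$$
   Context: $\mathbb{N}$ is the set of positive integers; $\{a\}^s$ denotes $a$ repeated $s$ times. ${}_{s+1}F_s(a_1,\ldots,a_{s+1};b_1,\ldots,b_s;x)=\sum_{i\geq 0}\frac{(a_1)_i\cdots(a_{s+1})_i}{(b_1)_i\cdots(b_s)_i}\frac{x^i}{i!}$, with $(a)_0=1$, $(a)_i=a(a+1)\cdots(a+i-1)$ for $i>0$ (a finite sum here since $1-k\leq 0$ is an integer). *)

theory Defs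
  imports Complex_Main
begin

definition hypergeom :: "real list \<Rightarrow> real list \<Rightarrow> real \<Rightarrow> real" where
  "hypergeom as bs x =
     (\<Sum>i. prod_list (map (\<lambda>a. pochhammer a i) as)
            / prod_list (map (\<lambda>b. pochhammer b i) bs) * x ^ i / fact i)"

end

theory Submission
  imports Defs
begin


lemma poch_half: "pochhammer (1/2::real) i / pochhammer (3/2) i = 1 / (2 * real i + 1)"
proof -
  have "pochhammer (1/2::real) (Suc i) = 1/2 * pochhammer (3/2) i"
    by (simp add: pochhammer_rec)
  moreover have "pochhammer (1/2::real) (Suc i) = pochhammer (1/2) i * (1/2 + real i)"
    by (simp add: pochhammer_rec')
  moreover have "pochhammer (3/2::real) i \<noteq> 0"
    by (simp add: pochhammer_eq_0_iff)
  ultimately show ?thesis by (simp add: field_simps)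
qed

lemma poch_neg: "k \<ge> 1 \<Longrightarrow> pochhammer (1 - real k) i / fact i = (-1)^i * real ((k-1) choose i)"
proof -
  assume k: "k \<ge> 1"
  have "pochhammer (1 - real k) i = pochhammer (- real (k-1)) i" using k by (simp add: of_nat_diff)
  also have "\<dots> = (-1)^i * pochhammer (real (k-1) - real i + 1) i" by (rule pochhammer_minus)
  finally have "pochhammer (1 - real k) i / fact i = (-1)^i * (real (k-1) gchoose i)"
    by (simp add: gbinomial_pochhammer')
  then show ?thesis by (simp add: binomial_gbinomial)
qed

lemma term_eq:
  assumes "k \<ge> 1"
  shows "prod_list (map (\<lambda>a. pochhammer a i) (replicate s (1/2) @ [1 - real k]))
            / prod_list (map (\<lambda>b. pochhammer b i) (replicate s (3/2))) * (- (x^2)) ^ i / fact i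
         = real ((k-1) choose i) * (x ^ (2*i) / (2 * real i + 1) ^ s)"
proof -
  have "prod_list (map (\<lambda>a. pochhammer a i) (replicate s (1/2) @ [1 - real k]))
            / prod_list (map (\<lambda>b. pochhammer b i) (replicate s (3/2))) * (- (x^2)) ^ i / fact i
        = (pochhammer (1/2::real) i / pochhammer (3/2) i) ^ s * (pochhammer (1 - real k) i / fact i) * (- (x^2)) ^ i"
    by (simp add: power_divide)
  also have "\<dots> = real ((k-1) choose i) * (x ^ (2*i) / (2 * real i + 1) ^ s)"
    using assms by (simp add: poch_half poch_neg power_divide power_mult_distrib power_mult
       flip: power_mult_distrib)
  finally show ?thesis .
qed


definition BB :: "(nat \<Rightarrow> real) \<Rightarrow> nat \<Rightarrow> real" where
  "BB a j = (\<Sum>i\<le>j. real (j choose i) * a i)"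

lemma BB_Suc: "BB a (Suc j) = BB a j + BB (\<lambda>i. a (Suc i)) j"
proof -
  have "BB a (Suc j) = a 0 + (\<Sum>i\<le>j. real (Suc j choose Suc i) * a (Suc i))"
    unfolding BB_def by (subst sum.atMost_Suc_shift) simp
  also have "\<dots> = a 0 + (\<Sum>i\<le>j. real (j choose Suc i) * a (Suc i)) + BB (\<lambda>i. a (Suc i)) j"
    by (simp add: BB_def sum.distrib algebra_simps)
  also have "a 0 + (\<Sum>i\<le>j. real (j choose Suc i) * a (Suc i)) = BB a j"
  proof -
    have "BB a j = (\<Sum>i\<le>Suc j. real (j choose i) * a i)" by (simp add: BB_def)
    also have "\<dots> = a 0 + (\<Sum>i\<le>j. real (j choose Suc i) * a (Suc i))"
      by (subst sum.atMost_Suc_shift) simp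
    finally show ?thesis by simp
  qed
  finally show ?thesis .
qed

lemma LL: "(\<Sum>j\<le>n. (-1)^j * real (n choose j) * BB a j) = (-1)^n * a n"
proof (induction n arbitrary: a)
  case 0
  then show ?case by (simp add: BB_def)
next
  case (Suc n)
  have "(\<Sum>j\<le>Suc n. (-1)^j * real (Suc n choose j) * BB a j)
      = BB a 0 + (\<Sum>j\<le>n. (-1)^(Suc j) * real (Suc n choose Suc j) * BB a (Suc j))"
    by (subst sum.atMost_Suc_shift) simp
  also have "\<dots> = BB a 0 + (\<Sum>j\<le>n. (-1)^(Suc j) * real (n choose Suc j) * BB a (Suc j))
       - (\<Sum>j\<le>n. (-1)^j * real (n choose j) * BB a (Suc j))"
  proof -
    have "(\<Sum>j\<le>n. (-1)^(Suc j) * real (Suc n choose Suc j) * BB a (Suc j))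
       = (\<Sum>j\<le>n. (-1)^(Suc j) * real (n choose Suc j) * BB a (Suc j) - (-1)^j * real (n choose j) * BB a (Suc j))"
      by (intro sum.cong) (simp_all add: algebra_simps)
    then show ?thesis by (simp add: sum_subtractf)
  qed
  also have "BB a 0 + (\<Sum>j\<le>n. (-1)^(Suc j) * real (n choose Suc j) * BB a (Suc j))
      = (\<Sum>j\<le>Suc n. (-1)^j * real (n choose j) * BB a j)"
    by (subst sum.atMost_Suc_shift[where n="n"]) simp
  also have "\<dots> = (\<Sum>j\<le>n. (-1)^j * real (n choose j) * BB a j)"
    by simp
  also have "\<dots> = (-1)^n * a n" by (rule Suc.IH)
  also have "(\<Sum>j\<le>n. (-1)^j * real (n choose j) * BB a (Suc j))
      = (\<Sum>j\<le>n. (-1)^j * real (n choose j) * BB a j) + (\<Sum>j\<le>n. (-1)^j * real (n choose j) * BB (\<lambda>i. a (Suc i)) j)"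
    by (simp add: BB_Suc sum.distrib algebra_simps)
  also have "\<dots> = (-1)^n * a n + (-1)^n * a (Suc n)"
    using Suc.IH[of a] Suc.IH[of "\<lambda>i. a (Suc i)"] by simp
  finally show ?case by simp
qed

lemma GG: "(\<Sum>j<n. (-1)^j * real (n choose Suc j) * BB a j) = (\<Sum>i<n. (-1)^i * a i)"
proof (induction n)
  case 0
  then show ?case by simp
next
  case (Suc n)
  have "(\<Sum>j<Suc n. (-1)^j * real (Suc n choose Suc j) * BB a j)
      = (\<Sum>j<Suc n. (-1)^j * real (n choose j) * BB a j) + (\<Sum>j<Suc n. (-1)^j * real (n choose Suc j) * BB a j)"
    by (simp add: sum.distrib algebra_simps)
  also have "(\<Sum>j<Suc n. (-1)^j * real (n choose j) * BB a j) = (-1)^n * a n"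
    using LL[of n a] by (simp add: lessThan_Suc_atMost)
  also have "(\<Sum>j<Suc n. (-1)^j * real (n choose Suc j) * BB a j) = (\<Sum>j<n. (-1)^j * real (n choose Suc j) * BB a j)"
    by simp
  finally show ?case using Suc.IH by simp
qed

lemma hyp_eq:
  assumes "k \<ge> 1"
  shows "hypergeom (replicate s (1/2) @ [1 - real k]) (replicate s (3/2)) (- (x ^ 2))
       = BB (\<lambda>i. x ^ (2*i) / (2 * real i + 1) ^ s) (k - 1)"
proof -
  have "hypergeom (replicate s (1/2) @ [1 - real k]) (replicate s (3/2)) (- (x ^ 2))
      = (\<Sum>i. real ((k-1) choose i) * (x ^ (2*i) / (2 * real i + 1) ^ s))"
    unfolding hypergeom_def using term_eq[OF assms] by simp
  also have "\<dots> = (\<Sum>i\<le>k-1. real ((k-1) choose i) * (x ^ (2*i) / (2 * real i + 1) ^ s))"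
    by (rule suminf_finite) auto
  finally show ?thesis by (simp add: BB_def)
qed

theorem lemma3p3:
  fixes n s :: nat and x :: real
  assumes "n \<ge> 1" and "s \<ge> 1"
  shows "(\<Sum>k<n. (-1) ^ k * x ^ (2 * k) / (2 * real k + 1) ^ s) =
         (\<Sum>k = 1..n. (-1) ^ (k - 1) * real (n choose k) *
            hypergeom (replicate s (1/2) @ [1 - real k]) (replicate s (3/2)) (- (x ^ 2)))"
proof -
  define a where "a = (\<lambda>i. x ^ (2*i) / (2 * real i + 1) ^ s)"
  have "(\<Sum>k = 1..n. (-1) ^ (k - 1) * real (n choose k) *
            hypergeom (replicate s (1/2) @ [1 - real k]) (replicate s (3/2)) (- (x ^ 2)))
      = (\<Sum>j<n. (-1) ^ j * real (n choose Suc j) * BB a j)"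
  proof -
    have "(\<Sum>k = 1..n. (-1) ^ (k - 1) * real (n choose k) *
            hypergeom (replicate s (1/2) @ [1 - real k]) (replicate s (3/2)) (- (x ^ 2)))
      = (\<Sum>k = Suc 0..n. (-1) ^ (k - 1) * real (n choose k) * BB a (k - 1))"
      by (intro sum.cong) (simp_all add: hyp_eq a_def)
    also have "\<dots> = (\<Sum>j<n. (-1) ^ j * real (n choose Suc j) * BB a j)"
      by (subst sum.atLeast1_atMost_eq) simp
    finally show ?thesis .
  qed
  also have "\<dots> = (\<Sum>i<n. (-1)^i * a i)" by (rule GG)
  finally show ?thesis by (simp add: a_def)
qed

end
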